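(* Let $T_{de}:l_\infty\to l_\infty$ be $T_{de}(x)=(0,x_0,x_1,\dots)$ with adjoint $T_{de}^*$. Then $$\Delta(T_{de}^* )=\mathcal B\cup\{(1-\delta)(1,\delta,\delta^2,\dots):\delta\in[0,1)\},$$ where for $\delta=0$ the sequence is $(1,0,0,\dots)$.
   Context: $l_\infty$: real bounded sequences indexed by $\mathbb N$. $ba(\mathbb N)$: norm dual of $l_\infty$, pairing $\langle x,\mu\rangle$. Adjoint: $\langle x,T^*(\mu)\rangle=\langle T(x),\mu\rangle$. $\Delta$: finitely additive probability measures on $2^{\mathbb N}$; a sequence $(p_n)$ with $p_n\ge0$, $\sum p_n=1$ is identified with the countably additive measure it defines. $\Delta(T^* )$: elements of $\Delta$ that are eigenvectors of $T^*$ (nonzero $\mu$ with $T^*\mu=\lambda\mu$, $\lambda\in\mathbb R$). $\mathcal B$: the set of Banach–Mazur limits, i.e. $\mu\in\Delta$ with $\langle x,\mu\rangle=\langle(x_1,x_2,\dots),\mu\rangle$ for all $x\in l_\infty$. *)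

theory Defs
  imports "HOL-Analysis.Analysis"
begin

text \<open>l_infty is modelled as the Banach space of bounded (automatically continuous,
  nat being discrete) real functions on nat; ba(N), its norm dual, as the bounded
  linear functionals on it; the pairing <x,mu> is blinfun_apply mu x.\<close>

type_synonym linf = "nat \<Rightarrow>\<^sub>C real"
type_synonym ba = "linf \<Rightarrow>\<^sub>L real"

definition ind :: "nat set \<Rightarrow> linf" where
  "ind A = Bcontfun (indicator A)"

text \<open>Delta: elements of ba(N) that are finitely additive probability measures,
  i.e. mu(A) = <1_A, mu> is nonnegative and mu(N) = 1 (finite additivity is
  automatic from linearity).\<close>
definition Delta :: "ba set" where
  "Delta = {\<mu>. (\<forall>A. blinfun_apply \<mu> (ind A) \<ge> 0) \<and> blinfun_apply \<mu> (ind UNIV) = 1}"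

text \<open>Eigenvectors of the adjoint T^*, where <x, T^* mu> = <T x, mu>.\<close>
definition adj_eigvec :: "(linf \<Rightarrow> linf) \<Rightarrow> ba \<Rightarrow> bool" where
  "adj_eigvec T \<mu> \<longleftrightarrow> \<mu> \<noteq> 0 \<and> (\<exists>c::real. \<forall>x. blinfun_apply \<mu> (T x) = c * blinfun_apply \<mu> x)"

definition Delta_adj :: "(linf \<Rightarrow> linf) \<Rightarrow> ba set" where
  "Delta_adj T = {\<mu> \<in> Delta. adj_eigvec T \<mu>}"

definition T_de :: "linf \<Rightarrow> linf" where
  "T_de x = Bcontfun (\<lambda>n. if n = 0 then 0 else apply_bcontfun x (n - 1))"

definition lshift :: "linf \<Rightarrow> linf" where
  "lshift x = Bcontfun (\<lambda>n. apply_bcontfun x (Suc n))"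

definition BM :: "ba set" where
  "BM = {\<mu> \<in> Delta. \<forall>x. blinfun_apply \<mu> x = blinfun_apply \<mu> (lshift x)}"

text \<open>The functional given by the countably additive measure (1-d)(1,d,d^2,...);
  note 0^0 = 1, so d = 0 gives (1,0,0,...).\<close>
definition geom_measures :: "ba set" where
  "geom_measures = {\<mu>. \<exists>\<delta>::real. 0 \<le> \<delta> \<and> \<delta> < 1 \<and>
     (\<forall>x. blinfun_apply \<mu> x = (\<Sum>n. (1 - \<delta>) * \<delta> ^ n * apply_bcontfun x n))}"

end

theory Submission
  imports Defs
begin

lemma bc_inv: "(\<And>n. \<bar>f n\<bar> \<le> B) \<Longrightarrow> apply_bcontfun (Bcontfun (f::nat\<Rightarrow>real)) = f"
  by (rule Bcontfun_inverse, rule bcontfun_normI[where b=B]) auto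

lemma ind_apply[simp]: "apply_bcontfun (ind A) = indicator A"
  unfolding ind_def by (rule bc_inv[where B=1]) (auto simp: indicator_def)

lemma absx: "\<bar>apply_bcontfun (x::linf) n\<bar> \<le> norm x"
  using norm_bounded[of x n] by simp

lemma T_apply[simp]: "apply_bcontfun (T_de x) n = (if n=0 then 0 else apply_bcontfun x (n-1))"
  unfolding T_de_def by (subst bc_inv[where B="norm x"]) (auto simp: absx)

lemma ls_apply[simp]: "apply_bcontfun (lshift x) n = apply_bcontfun x (Suc n)"
  unfolding lshift_def by (subst bc_inv[where B="norm x"]) (auto simp: absx)

lemma norm_lshift: "norm (lshift x) \<le> norm x"
  by (rule norm_bound) (simp add: absx[simplified])

lemma lsN_apply: "apply_bcontfun ((lshift^^N) x) n = apply_bcontfun x (n+N)"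
  by (induct N arbitrary: n) auto

lemma norm_lsN: "norm ((lshift^^N) x) \<le> norm x"
  by (induct N) (auto intro: order_trans[OF norm_lshift])

lemma decomp: "x = apply_bcontfun x 0 *\<^sub>R ind {0} + T_de (lshift x)"
  by (rule bcontfun_eqI) (auto simp: indicator_def)

lemma Tone: "T_de (ind UNIV) = ind UNIV - ind {0}"
  by (rule bcontfun_eqI) (auto simp: indicator_def)

lemma onem: "ind UNIV - ind {0} = ind (-{0})"
  by (rule bcontfun_eqI) (auto simp: indicator_def)

lemma lsT: "lshift (T_de x) = x"
  by (rule bcontfun_eqI) auto

lemma Delta_ne0: "\<mu> \<in> Delta \<Longrightarrow> \<mu> \<noteq> 0"
  unfolding Delta_def by auto

lemma geo_summable:
  assumes "0 \<le> (d::real)" "d < 1"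
  shows "summable (\<lambda>n. (1 - d) * d ^ n * apply_bcontfun x n)"
proof (rule summable_comparison_test'[where N=0])
  show "summable (\<lambda>n. (1 - d) * d ^ n * norm x)"
    using assms by (intro summable_mult2 summable_mult summable_geometric) auto
  fix n show "norm ((1 - d) * d ^ n * apply_bcontfun x n) \<le> (1 - d) * d ^ n * norm x"
    using assms absx[of x n] by (simp add: abs_mult mult_left_mono)
qed

lemma geo_one:
  assumes "0 \<le> (d::real)" "d < 1"
  shows "(\<lambda>n. (1 - d) * d ^ n) sums 1"
proof -
  have "(\<lambda>n. (1 - d) * d ^ n) sums ((1-d) * (1 / (1 - d)))"
    using assms by (intro sums_mult geometric_sums) auto
  thus ?thesis using assms by simp
qed

theorem mainTheorem15:
  shows "Delta_adj T_de = BM \<union> geom_measures"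
proof (rule set_eqI, rule iffI)
  fix \<mu> assume "\<mu> \<in> Delta_adj T_de"
  then have D: "\<mu> \<in> Delta" and "adj_eigvec T_de \<mu>" unfolding Delta_adj_def by auto
  then obtain c where E: "\<And>x. blinfun_apply \<mu> (T_de x) = c * blinfun_apply \<mu> x"
    unfolding adj_eigvec_def by auto
  define a where "a = blinfun_apply \<mu> (ind {0})"
  have a0: "a \<ge> 0" and one: "blinfun_apply \<mu> (ind UNIV) = 1"
    and nn: "blinfun_apply \<mu> (ind (-{0})) \<ge> 0"
    using D unfolding Delta_def a_def by auto
  have "c = 1 - a"
    using E[of "ind UNIV"] one unfolding Tone a_def by (simp add: blinfun.diff_right)
  moreover have "blinfun_apply \<mu> (ind UNIV) - a \<ge> 0"
    using nn unfolding a_def onem[symmetric] by (simp add: blinfun.diff_right)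
  ultimately have c0: "c \<ge> 0" and c1: "c \<le> 1" using one a0 by auto
  have step: "\<And>z. blinfun_apply \<mu> z = apply_bcontfun z 0 * a + c * blinfun_apply \<mu> (lshift z)"
  proof -
    fix z
    have "blinfun_apply \<mu> z = blinfun_apply \<mu> (apply_bcontfun z 0 *\<^sub>R ind {0} + T_de (lshift z))"
      by (subst decomp[of z]) simp
    also have "\<dots> = apply_bcontfun z 0 * a + c * blinfun_apply \<mu> (lshift z)"
      by (simp add: blinfun.add_right blinfun.scaleR_right E a_def)
    finally show "blinfun_apply \<mu> z = apply_bcontfun z 0 * a + c * blinfun_apply \<mu> (lshift z)" .
  qed
  show "\<mu> \<in> BM \<union> geom_measures"
  proof (cases "c = 1")
    case True
    then have "a = 0" using \<open>c = 1 - a\<close> by simp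
    then have "\<mu> \<in> BM" using D step True unfolding BM_def by auto
    thus ?thesis by simp
  next
    case False
    then have cl: "c < 1" using c1 by simp
    have a_eq: "a = 1 - c" using \<open>c = 1 - a\<close> by simp
    have "\<mu> \<in> geom_measures"
      unfolding geom_measures_def
    proof (intro CollectI exI conjI allI)
      show "0 \<le> c" "c < 1" by (fact c0, fact cl)
      fix x
      define p where "p N = (\<Sum>n<N. (1 - c) * c ^ n * apply_bcontfun x n)" for N
      have part: "blinfun_apply \<mu> x = p N + c ^ N * blinfun_apply \<mu> ((lshift^^N) x)" for N
      proof (induct N)
        case 0 show ?case by (simp add: p_def)
      next
        case (Suc N)
        have "blinfun_apply \<mu> ((lshift^^N) x) = apply_bcontfun x N * a + c * blinfun_apply \<mu> ((lshift^^Suc N) x)"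
          using step[of "(lshift^^N) x"] by (simp add: lsN_apply)
        with Suc show ?case by (simp add: p_def a_eq algebra_simps)
      qed
      have "(\<lambda>N. blinfun_apply \<mu> x - p N) \<longlonglongrightarrow> 0"
      proof (rule Lim_null_comparison)
        show "\<forall>\<^sub>F N in sequentially. norm (blinfun_apply \<mu> x - p N) \<le> c ^ N * (norm \<mu> * norm x)"
        proof (rule always_eventually, rule allI)
          fix N
          have "norm (blinfun_apply \<mu> x - p N) = c ^ N * norm (blinfun_apply \<mu> ((lshift^^N) x))"
            using part[of N] c0 by (simp add: abs_mult)
          also have "\<dots> \<le> c ^ N * (norm \<mu> * norm ((lshift^^N) x))"
            using c0 by (intro mult_left_mono norm_blinfun) auto
          also have "\<dots> \<le> c ^ N * (norm \<mu> * norm x)"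
            using c0 by (intro mult_left_mono norm_lsN) auto
          finally show "norm (blinfun_apply \<mu> x - p N) \<le> c ^ N * (norm \<mu> * norm x)" .
        qed
        show "(\<lambda>N. c ^ N * (norm \<mu> * norm x)) \<longlonglongrightarrow> 0"
          using c0 cl by (intro tendsto_mult_left_zero LIMSEQ_power_zero) auto
      qed
      then have "p \<longlonglongrightarrow> blinfun_apply \<mu> x"
        using tendsto_diff[OF tendsto_const[of "blinfun_apply \<mu> x"]] by fastforce
      then have "(\<lambda>n. (1 - c) * c ^ n * apply_bcontfun x n) sums blinfun_apply \<mu> x"
        unfolding sums_def p_def by simp
      thus "blinfun_apply \<mu> x = (\<Sum>n. (1 - c) * c ^ n * apply_bcontfun x n)"
        by (simp add: sums_iff)
    qed
    thus ?thesis by simp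
  qed
next
  fix \<mu> assume "\<mu> \<in> BM \<union> geom_measures"
  then show "\<mu> \<in> Delta_adj T_de"
  proof
    assume "\<mu> \<in> BM"
    then have D: "\<mu> \<in> Delta" and S: "\<And>x. blinfun_apply \<mu> x = blinfun_apply \<mu> (lshift x)"
      unfolding BM_def by auto
    have "blinfun_apply \<mu> (T_de x) = 1 * blinfun_apply \<mu> x" for x
      using S[of "T_de x"] by (simp add: lsT)
    then show ?thesis using D Delta_ne0[OF D] unfolding Delta_adj_def adj_eigvec_def by blast
  next
    assume "\<mu> \<in> geom_measures"
    then obtain d :: real where d0: "0 \<le> d" and d1: "d < 1" and
      M: "\<And>x. blinfun_apply \<mu> x = (\<Sum>n. (1 - d) * d ^ n * apply_bcontfun x n)"
      unfolding geom_measures_def by auto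
    have D: "\<mu> \<in> Delta"
      unfolding Delta_def
    proof (intro CollectI conjI allI)
      fix A
      show "blinfun_apply \<mu> (ind A) \<ge> 0"
        unfolding M using geo_summable[OF d0 d1, of "ind A"] d0 d1
        by (intro suminf_nonneg) (auto simp: indicator_def)
      have "(\<lambda>n. (1 - d) * d ^ n * apply_bcontfun (ind UNIV) n) sums 1"
        using geo_one[OF d0 d1] by simp
      then show "blinfun_apply \<mu> (ind UNIV) = 1" unfolding M by (simp add: sums_iff)
    qed
    have "blinfun_apply \<mu> (T_de x) = d * blinfun_apply \<mu> x" for x
    proof -
      have g: "(\<lambda>n. (1 - d) * d ^ n * apply_bcontfun x n) sums blinfun_apply \<mu> x"
        unfolding M by (rule summable_sums[OF geo_summable[OF d0 d1]])
      have "(\<lambda>n. d * ((1 - d) * d ^ n * apply_bcontfun x n)) sums (d * blinfun_apply \<mu> x)"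
        by (rule sums_mult[OF g])
      then have "(\<lambda>n. (1 - d) * d ^ Suc n * apply_bcontfun (T_de x) (Suc n)) sums (d * blinfun_apply \<mu> x)"
        by (simp add: algebra_simps)
      then have "(\<lambda>n. (1 - d) * d ^ n * apply_bcontfun (T_de x) n) sums (d * blinfun_apply \<mu> x)"
        by (subst (asm) sums_Suc_iff) simp
      then show ?thesis unfolding M[of "T_de x"] by (simp add: sums_iff)
    qed
    then show ?thesis using D Delta_ne0[OF D] unfolding Delta_adj_def adj_eigvec_def by blast
  qed
qed

end
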